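(* Let $p\in(0,1)$ and let $(\lambda_n)_{n\ge1}$ be a sequence with $\lambda_1=1$ and $0<\lambda_n\le\lambda_{n-1}$ for all $n>1$. Let $r_1,r_2,\dots$ be $\{0,1\}$-valued random variables with $\Pr(r_1=1)=p$ and, for every $n\ge2$, $\Pr(r_n=1\mid r_1,\dots,r_{n-1})=\lambda_n p+(1-\lambda_n)\bar p_{n-1}$, where $\bar p_m=\frac1m\sum_{i=1}^m r_i$. Define $\hat r_1=r_1$, $\hat r_i=\frac{r_i-(1-\lambda_i)\bar p_{i-1}}{\lambda_i}$ for $i\ge2$, and for weights $\omega_1,\dots,\omega_n>0$ let $\hat p_n=\frac{\sum_{i=1}^n\omega_i\hat r_i}{\sum_{i=1}^n\omega_i}$. Let $\epsilon>0$ and $\alpha\in(0,1)$. If \[\Big(\sum_{i=1}^n\omega_i\Big)^2\ge\frac{1}{2\epsilon^2}\log\frac{2}{\alpha}\sum_{i=1}^n\Big(\frac{\omega_i}{\lambda_i}\Big)^2,\] then $\Pr(|\hat p_n-p|\le\epsilon)\ge1-\alpha$.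
   Context: $\log$ denotes the natural logarithm. *)

theory Defs
  imports "HOL-Probability.Probability"
begin

definition pbar :: "(nat \<Rightarrow> 'a \<Rightarrow> real) \<Rightarrow> nat \<Rightarrow> 'a \<Rightarrow> real" where
  "pbar r m x = (\<Sum>i=1..m. r i x) / real m"

definition rhat :: "(nat \<Rightarrow> real) \<Rightarrow> (nat \<Rightarrow> 'a \<Rightarrow> real) \<Rightarrow> nat \<Rightarrow> 'a \<Rightarrow> real" where
  "rhat lam r i x = (if i = 1 then r 1 x
                     else (r i x - (1 - lam i) * pbar r (i - 1) x) / lam i)"

definition phat :: "(nat \<Rightarrow> real) \<Rightarrow> (nat \<Rightarrow> real) \<Rightarrow> (nat \<Rightarrow> 'a \<Rightarrow> real) \<Rightarrow> nat \<Rightarrow> 'a \<Rightarrow> real" where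
  "phat lam w r n x = (\<Sum>i=1..n. w i * rhat lam r i x) / (\<Sum>i=1..n. w i)"

end

theory Submission
  imports Defs
begin

lemma pbar_cong:
  assumes "\<forall>j\<in>{1..m}. r j x = r' j y" shows "pbar r m x = pbar r' m y"
  unfolding pbar_def using assms by (auto intro!: sum.cong arg_cong2[where f="(/)"])

lemma rhat_cong:
  assumes "1 \<le> i" "\<forall>j\<in>{1..i}. r j x = r' j y" shows "rhat lam r i x = rhat lam r' i y"
proof -
  have "pbar r (i-1) x = pbar r' (i-1) y" using assms by (intro pbar_cong) auto
  then show ?thesis using assms unfolding rhat_def by auto
qed

lemma phat_cong:
  assumes "\<forall>j\<in>{1..n}. r j x = r' j y" shows "phat lam w r n x = phat lam w r' n y"
  unfolding phat_def using assms by (auto intro!: sum.cong arg_cong2[where f="(/)"] rhat_cong)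

definition Bs :: "nat \<Rightarrow> (nat \<Rightarrow> real) set" where
  "Bs k = {b. (\<forall>i\<in>{1..k}. b i \<in> {0,1}) \<and> (\<forall>i. i \<notin> {1..k} \<longrightarrow> b i = 0)}"

lemma Bs_0: "Bs 0 = {\<lambda>_. 0}"
  unfolding Bs_def by auto

lemma Bs_Suc: "Bs (Suc k) = (\<lambda>(b,a). b(Suc k := a)) ` (Bs k \<times> {0,1})"
proof
  show "(\<lambda>(b,a). b(Suc k := a)) ` (Bs k \<times> {0,1}) \<subseteq> Bs (Suc k)"
    unfolding Bs_def by (fastforce simp: le_Suc_eq)
next
  show "Bs (Suc k) \<subseteq> (\<lambda>(b,a). b(Suc k := a)) ` (Bs k \<times> {0,1})"
  proof
    fix b' assume b': "b' \<in> Bs (Suc k)"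
    have "b'(Suc k := 0) \<in> Bs k" "b' (Suc k) \<in> {0,1}" using b' unfolding Bs_def
      by (auto simp: le_Suc_eq)
    moreover have "b' = (b'(Suc k := 0))(Suc k := b' (Suc k))" by simp
    ultimately show "b' \<in> (\<lambda>(b,a). b(Suc k := a)) ` (Bs k \<times> {0,1})"
      by (intro image_eqI[where x="(b'(Suc k := 0), b' (Suc k))"]) auto
  qed
qed

lemma Bs_inj: "inj_on (\<lambda>(b,a). b(Suc k := a)) (Bs k \<times> X)"
proof (rule inj_onI, clarify)
  fix b a b' a' assume b: "b \<in> Bs k" "b' \<in> Bs k" and e: "b(Suc k := a) = b'(Suc k := a')"
  have "a = a'" using fun_cong[OF e, of "Suc k"] by simp
  moreover have "b = b'"
  proof
    fix i show "b i = b' i"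
    proof (cases "i = Suc k")
      case True then show ?thesis using b unfolding Bs_def by auto
    next
      case False then show ?thesis using fun_cong[OF e, of i] by simp
    qed
  qed
  ultimately show "b = b' \<and> a = a'" by simp
qed

lemma finite_Bs: "finite (Bs k)"
  by (induction k) (auto simp: Bs_0 Bs_Suc)

definition Sb :: "(nat \<Rightarrow> real) \<Rightarrow> (nat \<Rightarrow> real) \<Rightarrow> real \<Rightarrow> nat \<Rightarrow> (nat \<Rightarrow> real) \<Rightarrow> real" where
  "Sb lam w p k b = (\<Sum>i=1..k. w i * (rhat lam (\<lambda>i (_::unit). b i) i () - p))"

lemma Sb_Suc:
  assumes "lam 1 = 1"
  shows "Sb lam w p (Suc k) (b(Suc k := a)) = Sb lam w p k b +
     w (Suc k) * ((a - (1 - lam (Suc k)) * pbar (\<lambda>i (_::unit). b i) k ()) / lam (Suc k) - p)"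
proof -
  have 1: "(\<Sum>i=1..k. w i * (rhat lam (\<lambda>i (_::unit). (b(Suc k := a)) i) i () - p))
        = Sb lam w p k b"
    unfolding Sb_def by (intro sum.cong refl arg_cong2[where f="(*)"] arg_cong2[where f="(-)"] rhat_cong) auto
  have 2: "rhat lam (\<lambda>i (_::unit). (b(Suc k := a)) i) (Suc k) () =
      (a - (1 - lam (Suc k)) * pbar (\<lambda>i (_::unit). b i) k ()) / lam (Suc k)"
  proof (cases "k = 0")
    case True then show ?thesis using assms by (simp add: rhat_def)
  next
    case False
    have "pbar (\<lambda>i (_::unit). (b(Suc k := a)) i) k () = pbar (\<lambda>i (_::unit). b i) k ()"
      by (intro pbar_cong) auto
    then show ?thesis using False by (simp add: rhat_def)
  qed
  show ?thesis unfolding Sb_def[of _ _ _ "Suc k"] using 1 2 by simp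
qed


lemma two_point_aux:
  fixes q h :: real
  assumes "0 \<le> q" "q \<le> 1" "h \<ge> 0"
  shows "q * exp (h * (1 - q)) + (1 - q) * exp (- h * q) \<le> exp (h\<^sup>2 / 8)"
proof -
  have pos: "1 + q * (exp h - 1) > 0" using assms
    by (smt (verit) exp_ge_zero mult_nonneg_nonneg one_le_exp_iff mult_left_le_one_le)
  have "-h * q + ln (1 + q * (exp h - 1)) \<le> h\<^sup>2 / 8"
    using Hoeffdings_lemma_aux[of h q] assms by simp
  then have "exp (-h * q + ln (1 + q * (exp h - 1))) \<le> exp (h\<^sup>2 / 8)" by simp
  also have "exp (-h * q + ln (1 + q * (exp h - 1))) = exp (-h*q) * (1 + q * (exp h - 1))"
    using pos by (simp only: exp_add exp_ln mult.commute)
  also have "exp (-h*q) * (1 + q * (exp h - 1)) = q * exp (h * (1 - q)) + (1 - q) * exp (- h * q)"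
    by (simp add: algebra_simps flip: exp_add)
  finally show ?thesis .
qed

lemma two_point:
  fixes q s c :: real
  assumes "0 \<le> q" "q \<le> 1"
  shows "q * exp (s * ((1 - q) * c)) + (1 - q) * exp (s * (- q * c)) \<le> exp (s\<^sup>2 * c\<^sup>2 / 8)"
proof (cases "s * c \<ge> 0")
  case True
  then show ?thesis using two_point_aux[OF assms True]
    by (simp add: algebra_simps power_mult_distrib)
next
  case False
  have "(1 - q) * exp ((- (s * c)) * (1 - (1 - q))) + (1 - (1 - q)) * exp (- (- (s * c)) * (1 - q))
     \<le> exp ((- (s * c))\<^sup>2 / 8)"
    using False assms by (intro two_point_aux) auto
  then show ?thesis by (simp add: algebra_simps power_mult_distrib)
qed


locale dbs = prob_space M for M :: "'a measure" +
  fixes r :: "nat \<Rightarrow> 'a \<Rightarrow> real" and lam :: "nat \<Rightarrow> real" and p :: real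
  assumes p: "0 < p" "p < 1"
    and lam1: "lam 1 = 1"
    and lam_pos: "\<And>k. k > 1 \<Longrightarrow> 0 < lam k"
    and lam_mono: "\<And>k. k > 1 \<Longrightarrow> lam k \<le> lam (k - 1)"
    and r_meas: "\<And>i. i \<ge> 1 \<Longrightarrow> r i \<in> borel_measurable M"
    and r_01: "\<And>i x. i \<ge> 1 \<Longrightarrow> x \<in> space M \<Longrightarrow> r i x \<in> {0, 1}"
    and r1: "measure M {x \<in> space M. r 1 x = 1} = p"
    and r_cond: "\<And>k b. k \<ge> 2 \<Longrightarrow> (\<forall>i\<in>{1..k-1}. b i \<in> {0::real, 1}) \<Longrightarrow>
        measure M {x \<in> space M. (\<forall>i\<in>{1..k-1}. r i x = b i) \<and> r k x = 1}
        = (lam k * p + (1 - lam k) * ((\<Sum>i=1..k-1. b i) / real (k - 1)))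
          * measure M {x \<in> space M. \<forall>i\<in>{1..k-1}. r i x = b i}"
begin

definition cyl where "cyl k b = {x \<in> space M. \<forall>i\<in>{1..k}. r i x = b i}"
definition tau where "tau k x = (\<lambda>i. if i \<in> {1..k} then r i x else 0)"
definition P where "P k b = measure M (cyl k b)"
definition qf where "qf k b = lam (Suc k) * p + (1 - lam (Suc k)) * pbar (\<lambda>i (_::unit). b i) k ()"

lemma lam_bounds: "k \<ge> 1 \<Longrightarrow> 0 < lam k \<and> lam k \<le> 1"
proof (induction k rule: dec_induct)
  case base then show ?case using lam1 by simp
next
  case (step k)
  then show ?case using lam_pos[of "Suc k"] lam_mono[of "Suc k"] by simp
qed

lemma pbar_bounds:
  assumes "b \<in> Bs k" shows "0 \<le> pbar (\<lambda>i (_::unit). b i) k () \<and> pbar (\<lambda>i (_::unit). b i) k () \<le> 1"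
proof -
  have b: "0 \<le> b i \<and> b i \<le> 1" if "i \<in> {1..k}" for i
  proof -
    have "b i \<in> {0,1}" using assms that unfolding Bs_def by blast
    then show ?thesis by auto
  qed
  have "(\<Sum>i=1..k. b i) \<le> of_nat (card {1..k}) * 1" using b by (intro sum_bounded_above) auto
  moreover have "0 \<le> (\<Sum>i=1..k. b i)" using b by (intro sum_nonneg) auto
  ultimately show ?thesis unfolding pbar_def by (auto simp: divide_le_eq)
qed

lemma qf_bounds:
  assumes "b \<in> Bs k" shows "0 \<le> qf k b \<and> qf k b \<le> 1"
proof -
  define l where "l = lam (Suc k)"
  define pb where "pb = pbar (\<lambda>i (_::unit). b i) k ()"
  have l: "0 < l" "l \<le> 1" using lam_bounds[of "Suc k"] unfolding l_def by auto
  have pb: "0 \<le> pb" "pb \<le> 1" using pbar_bounds[OF assms] unfolding pb_def by auto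
  have "l * p \<le> l * 1" using l p by (intro mult_left_mono) auto
  moreover have "(1 - l) * pb \<le> (1 - l) * 1" using l pb by (intro mult_left_mono) auto
  moreover have "0 \<le> l * p" "0 \<le> (1 - l) * pb" using l pb p by auto
  ultimately show ?thesis unfolding qf_def l_def[symmetric] pb_def[symmetric] by auto
qed

lemma cyl_sets: "cyl k b \<in> sets M"
  unfolding cyl_def
proof (intro sets.sets_Collect_finite_All)
  fix i assume i: "i \<in> {1..k}"
  then have [measurable]: "r i \<in> borel_measurable M" using r_meas by auto
  show "{x \<in> space M. r i x = b i} \<in> sets M" by measurable
qed auto

lemma P_nonneg: "0 \<le> P k b" unfolding P_def by simp

lemma P_0: "P 0 b = 1"
  unfolding P_def cyl_def by (simp add: prob_space)

lemma P_Suc1: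
  assumes "b \<in> Bs k" shows "P (Suc k) (b(Suc k := 1)) = qf k b * P k b"
proof (cases "k = 0")
  case True
  have "cyl (Suc k) (b(Suc k := 1)) = {x \<in> space M. r 1 x = 1}"
    unfolding cyl_def True by auto
  then show ?thesis using True r1 lam1 P_0 unfolding P_def qf_def by simp
next
  case False
  have bs: "\<forall>i\<in>{1..Suc k - 1}. b i \<in> {0::real, 1}" using assms unfolding Bs_def by auto
  have e1: "cyl (Suc k) (b(Suc k := 1)) =
      {x \<in> space M. (\<forall>i\<in>{1..Suc k - 1}. r i x = b i) \<and> r (Suc k) x = 1}"
    unfolding cyl_def by (auto simp: le_Suc_eq)
  have e2: "cyl k b = {x \<in> space M. \<forall>i\<in>{1..Suc k-1}. r i x = b i}"
    unfolding cyl_def by simp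
  have "qf k b = lam (Suc k)*p + (1 - lam (Suc k)) * ((\<Sum>i=1..Suc k-1. b i)/ real (Suc k - 1))"
    by (simp add: qf_def pbar_def)
  then show ?thesis unfolding P_def e1 e2 using False
    by (simp only:) (rule r_cond[OF _ bs], simp)
qed

lemma P_split:
  assumes "b \<in> Bs k" shows "P k b = P (Suc k) (b(Suc k := 0)) + P (Suc k) (b(Suc k := 1))"
proof -
  have "cyl k b = cyl (Suc k) (b(Suc k := 0)) \<union> cyl (Suc k) (b(Suc k := 1))"
    unfolding cyl_def using r_01[of "Suc k"] by (auto simp: le_Suc_eq) blast+
  moreover have "cyl (Suc k) (b(Suc k := 0)) \<inter> cyl (Suc k) (b(Suc k := 1)) = {}"
    unfolding cyl_def by (auto dest!: bspec[where x="Suc k"])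
  ultimately show ?thesis unfolding P_def
    by (simp add: finite_measure_Union cyl_sets)
qed

lemma P_Suc0:
  assumes "b \<in> Bs k" shows "P (Suc k) (b(Suc k := 0)) = (1 - qf k b) * P k b"
  using P_split[OF assms] P_Suc1[OF assms] by (simp add: algebra_simps)

lemma measure_tau:
  "measure M {x \<in> space M. Q (tau k x)} = (\<Sum>b\<in>{b\<in>Bs k. Q b}. P k b)"
proof -
  have tauB: "tau k x \<in> Bs k" if "x \<in> space M" for x
    using r_01 that unfolding tau_def Bs_def by auto
  have cyl_tau: "x \<in> cyl k b \<longleftrightarrow> x \<in> space M \<and> tau k x = b" if "b \<in> Bs k" for x b
    using that unfolding cyl_def tau_def Bs_def by (auto simp: fun_eq_iff)
  have eq: "{x \<in> space M. Q (tau k x)} = (\<Union>b\<in>{b\<in>Bs k. Q b}. cyl k b)"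
    using tauB cyl_tau by auto
  have "measure M (\<Union>b\<in>{b\<in>Bs k. Q b}. cyl k b) = (\<Sum>b\<in>{b\<in>Bs k. Q b}. measure M (cyl k b))"
    by (intro finite_measure_finite_Union) (auto simp: finite_Bs cyl_sets disjoint_family_on_def cyl_tau)
  then show ?thesis unfolding eq P_def .
qed


lemma mgf:
  "(\<Sum>b\<in>Bs k. P k b * exp (s * Sb lam w p k b)) \<le> exp (s\<^sup>2 * (\<Sum>i=1..k. (w i / lam i)\<^sup>2) / 8)"
proof (induction k)
  case 0 then show ?case by (simp add: Bs_0 P_0 Sb_def)
next
  case (Suc k)
  define c where "c = w (Suc k) / lam (Suc k)"
  define E where "E b = P k b * exp (s * Sb lam w p k b)" for b
  define G where "G b = P (Suc k) b * exp (s * Sb lam w p (Suc k) b)" for b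
  have lamk: "0 < lam (Suc k)" "lam (Suc k) \<le> 1" using lam_bounds[of "Suc k"] by auto
  have step: "(\<Sum>a\<in>{0,1}. G (b(Suc k := a))) \<le> E b * exp (s\<^sup>2 * c\<^sup>2 / 8)" if b: "b \<in> Bs k" for b
  proof -
    define q where "q = qf k b"
    define pb where "pb = pbar (\<lambda>i (_::unit). b i) k ()"
    define S where "S = Sb lam w p k b"
    have q: "0 \<le> q" "q \<le> 1" using qf_bounds[OF b] q_def by auto
    have y1: "w (Suc k) * ((1 - (1 - lam (Suc k)) * pb) / lam (Suc k) - p) = (1 - q) * c"
      using lamk unfolding q_def qf_def pb_def[symmetric] c_def by (simp add: field_simps)
    have y0: "w (Suc k) * ((0 - (1 - lam (Suc k)) * pb) / lam (Suc k) - p) = - q * c"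
      using lamk unfolding q_def qf_def pb_def[symmetric] c_def by (simp add: field_simps)
    have e: "\<And>y. exp (s * (S + y)) = exp (s * S) * exp (s * y)" by (simp add: distrib_left exp_add)
    have "(\<Sum>a\<in>{0,1}. G (b(Suc k := a))) = G (b(Suc k := 0)) + G (b(Suc k := 1))" by simp
    also have "\<dots> = (1 - q) * P k b * exp (s * (S + - q * c)) + q * P k b * exp (s * (S + (1 - q) * c))"
      unfolding G_def Sb_Suc[of lam, OF lam1] P_Suc0[OF b] P_Suc1[OF b] y0 y1
        pb_def[symmetric] S_def[symmetric] q_def[symmetric] by simp
    also have "\<dots> = E b * (q * exp (s * ((1 - q) * c)) + (1 - q) * exp (s * (- q * c)))"
      unfolding e E_def S_def[symmetric] by (simp add: algebra_simps)
    also have "\<dots> \<le> E b * exp (s\<^sup>2 * c\<^sup>2 / 8)"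
      using q by (intro mult_left_mono two_point) (auto simp: E_def P_nonneg)
    finally show ?thesis .
  qed
  have "(\<Sum>b\<in>Bs (Suc k). G b) = sum (G \<circ> (\<lambda>(b,a). b(Suc k := a))) (Bs k \<times> {0,1})"
    unfolding Bs_Suc by (rule sum.reindex[OF Bs_inj])
  also have "\<dots> = (\<Sum>b\<in>Bs k. \<Sum>a\<in>{0,1}. G (b(Suc k := a)))"
    by (subst sum.cartesian_product) (simp add: case_prod_unfold)
  also have "\<dots> \<le> (\<Sum>b\<in>Bs k. E b * exp (s\<^sup>2 * c\<^sup>2 / 8))"
    by (intro sum_mono step)
  also have "\<dots> = (\<Sum>b\<in>Bs k. E b) * exp (s\<^sup>2 * c\<^sup>2 / 8)"
    by (simp add: sum_distrib_right)
  also have "\<dots> \<le> exp (s\<^sup>2 * (\<Sum>i=1..k. (w i / lam i)\<^sup>2) / 8) * exp (s\<^sup>2 * c\<^sup>2 / 8)"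
    using Suc.IH unfolding E_def by (intro mult_right_mono) auto
  also have "\<dots> = exp (s\<^sup>2 * (\<Sum>i=1..Suc k. (w i / lam i)\<^sup>2) / 8)"
    by (simp add: c_def ring_distribs add_divide_distrib flip: exp_add)
  finally show ?case unfolding G_def .
qed

end


theorem theoremA14:
  fixes M :: "'a measure" and r :: "nat \<Rightarrow> 'a \<Rightarrow> real"
    and lam w :: "nat \<Rightarrow> real" and p \<epsilon> \<alpha> :: real and n :: nat
  assumes M: "prob_space M"
    and p: "0 < p" "p < 1"
    and lam1: "lam 1 = 1"
    and lam_pos: "\<And>k. k > 1 \<Longrightarrow> 0 < lam k"
    and lam_mono: "\<And>k. k > 1 \<Longrightarrow> lam k \<le> lam (k - 1)"
    and r_meas: "\<And>i. i \<ge> 1 \<Longrightarrow> r i \<in> borel_measurable M"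
    and r_01: "\<And>i x. i \<ge> 1 \<Longrightarrow> x \<in> space M \<Longrightarrow> r i x \<in> {0, 1}"
    and r1: "measure M {x \<in> space M. r 1 x = 1} = p"
    and r_cond: "\<And>k b. k \<ge> 2 \<Longrightarrow> (\<forall>i\<in>{1..k-1}. b i \<in> {0::real, 1}) \<Longrightarrow>
        measure M {x \<in> space M. (\<forall>i\<in>{1..k-1}. r i x = b i) \<and> r k x = 1}
        = (lam k * p + (1 - lam k) * ((\<Sum>i=1..k-1. b i) / real (k - 1)))
          * measure M {x \<in> space M. \<forall>i\<in>{1..k-1}. r i x = b i}"
    and n: "n \<ge> 1"
    and w_pos: "\<And>i. 1 \<le> i \<Longrightarrow> i \<le> n \<Longrightarrow> 0 < w i"
    and eps: "0 < \<epsilon>"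
    and alpha: "0 < \<alpha>" "\<alpha> < 1"
    and hyp: "(\<Sum>i=1..n. w i)\<^sup>2 \<ge>
        1 / (2 * \<epsilon>\<^sup>2) * ln (2 / \<alpha>) * (\<Sum>i=1..n. (w i / lam i)\<^sup>2)"
  shows "measure M {x \<in> space M. \<bar>phat lam w r n x - p\<bar> \<le> \<epsilon>} \<ge> 1 - \<alpha>"
proof -
  interpret D: dbs M r lam p
    using M p lam1 lam_pos lam_mono r_meas r_01 r1 r_cond
    by (intro dbs.intro dbs_axioms.intro) auto
  define W where "W = (\<Sum>i=1..n. w i)"
  define V where "V = (\<Sum>i=1..n. (w i / lam i)\<^sup>2)"
  define \<Phi> where "\<Phi> b = phat lam w (\<lambda>i (_::unit). b i) n ()" for b
  define S where "S b = Sb lam w p n b" for b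
  define t where "t = \<epsilon> * W"
  define s where "s = 4 * t / V"
  have W: "W > 0" unfolding W_def using n w_pos by (intro sum_pos) auto
  have "(w 1 / lam 1)\<^sup>2 \<le> V" unfolding V_def using n by (intro member_le_sum) auto
  moreover have "(w 1 / lam 1)\<^sup>2 > 0" using w_pos[of 1] n lam1 by simp
  ultimately have V: "V > 0" by linarith
  have t: "t > 0" unfolding t_def using eps W by simp
  have s: "s > 0" unfolding s_def using t V by simp
  have PhiS: "\<Phi> b - p = S b / W" for b
  proof -
    have "S b = (\<Sum>i=1..n. w i * rhat lam (\<lambda>i (_::unit). b i) i ()) - p * W"
      unfolding S_def Sb_def W_def by (simp add: algebra_simps sum_subtractf sum_distrib_left)
    then show ?thesis using W unfolding \<Phi>_def phat_def W_def[symmetric] by (simp add: field_simps)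
  qed
  have tauPhi: "phat lam w r n x = \<Phi> (D.tau n x)" for x
    unfolding \<Phi>_def by (intro phat_cong) (auto simp: D.tau_def)
  have "measure M {x \<in> space M. \<bar>phat lam w r n x - p\<bar> \<le> \<epsilon>}
      = measure M {x \<in> space M. (\<lambda>b. \<bar>\<Phi> b - p\<bar> \<le> \<epsilon>) (D.tau n x)}"
    unfolding tauPhi by simp
  also have "\<dots> = (\<Sum>b\<in>{b\<in>Bs n. \<bar>\<Phi> b - p\<bar> \<le> \<epsilon>}. D.P n b)"
    by (rule D.measure_tau)
  also have "\<dots> = (\<Sum>b\<in>Bs n. if \<bar>\<Phi> b - p\<bar> \<le> \<epsilon> then D.P n b else 0)"
    by (simp add: sum.inter_filter finite_Bs)
  finally have meq: "measure M {x \<in> space M. \<bar>phat lam w r n x - p\<bar> \<le> \<epsilon>} =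
      (\<Sum>b\<in>Bs n. if \<bar>\<Phi> b - p\<bar> \<le> \<epsilon> then D.P n b else 0)" .
  have tot: "(\<Sum>b\<in>Bs n. D.P n b) = 1"
    using D.measure_tau[of "\<lambda>_. True" n] by (simp add: D.prob_space)
  have pw: "D.P n b - exp (- s * t) * (D.P n b * exp (s * S b)) - exp (- s * t) * (D.P n b * exp ((- s) * S b))
      \<le> (if \<bar>\<Phi> b - p\<bar> \<le> \<epsilon> then D.P n b else 0)" for b
  proof -
    have P0: "0 \<le> D.P n b" by (rule D.P_nonneg)
    have e1: "exp (- s * t) * (D.P n b * exp (s * S b)) = D.P n b * exp (s * S b - s * t)"
      by (simp add: exp_diff exp_minus field_simps)
    have e2: "exp (- s * t) * (D.P n b * exp ((- s) * S b)) = D.P n b * exp (- s * S b - s * t)"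
      by (simp add: exp_diff exp_minus field_simps)
    show ?thesis
    proof (cases "\<bar>\<Phi> b - p\<bar> \<le> \<epsilon>")
      case True
      have "0 \<le> D.P n b * exp (s * S b - s * t)" "0 \<le> D.P n b * exp (- s * S b - s * t)"
        using P0 by auto
      then show ?thesis using True unfolding e1 e2 by (simp only: if_True)
    next
      case False
      then have "\<bar>S b / W\<bar> > \<epsilon>" using PhiS by simp
      have eqa: "\<bar>S b / W\<bar> = \<bar>S b\<bar> / W" using W by (simp add: abs_divide)
      have "\<epsilon> < \<bar>S b\<bar> / W" using \<open>\<bar>S b / W\<bar> > \<epsilon>\<close> unfolding eqa .
      then have "t < \<bar>S b\<bar>" unfolding t_def using pos_less_divide_eq[OF W] by simp
      then have "S b > t \<or> - S b > t" by linarith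
      then have "s * S b > s * t \<or> s * (- S b) > s * t"
        using s mult_strict_left_mono by blast
      then have "s * S b - s * t > 0 \<or> - s * S b - s * t > 0" by auto
      then have "exp (s * S b - s * t) \<ge> 1 \<or> exp (- s * S b - s * t) \<ge> 1" by auto
      moreover have "D.P n b * exp (s * S b - s * t) \<ge> 0" "D.P n b * exp (- s * S b - s * t) \<ge> 0"
        using P0 by auto
      moreover have "exp (s * S b - s * t) \<ge> 1 \<Longrightarrow> D.P n b * exp (s * S b - s * t) \<ge> D.P n b * 1"
        using P0 by (intro mult_left_mono) auto
      moreover have "exp (- s * S b - s * t) \<ge> 1 \<Longrightarrow> D.P n b * exp (- s * S b - s * t) \<ge> D.P n b * 1"
        using P0 by (intro mult_left_mono) auto
      ultimately have "D.P n b * exp (s * S b - s * t) + D.P n b * exp (- s * S b - s * t) \<ge> D.P n b"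
        by linarith
      then show ?thesis using False unfolding e1 e2 by simp
    qed
  qed
  have "1 - exp (- s * t) * exp (s\<^sup>2 * V / 8) - exp (- s * t) * exp ((- s)\<^sup>2 * V / 8)
      \<le> (\<Sum>b\<in>Bs n. D.P n b) - exp (- s * t) * (\<Sum>b\<in>Bs n. D.P n b * exp (s * S b))
          - exp (- s * t) * (\<Sum>b\<in>Bs n. D.P n b * exp ((- s) * S b))"
  proof -
    have "exp (- s * t) * (\<Sum>b\<in>Bs n. D.P n b * exp (s * S b)) \<le> exp (- s * t) * exp (s\<^sup>2 * V / 8)"
      using D.mgf[of n s w] unfolding V_def S_def by (intro mult_left_mono) auto
    moreover have "exp (- s * t) * (\<Sum>b\<in>Bs n. D.P n b * exp ((- s) * S b)) \<le> exp (- s * t) * exp ((- s)\<^sup>2 * V / 8)"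
      using D.mgf[of n "- s" w] unfolding V_def S_def by (intro mult_left_mono) auto
    ultimately show ?thesis unfolding tot by linarith
  qed
  also have "\<dots> = (\<Sum>b\<in>Bs n. D.P n b - exp (- s * t) * (D.P n b * exp (s * S b))
      - exp (- s * t) * (D.P n b * exp ((- s) * S b)))"
    by (simp add: sum_subtractf sum_distrib_left)
  also have "\<dots> \<le> (\<Sum>b\<in>Bs n. if \<bar>\<Phi> b - p\<bar> \<le> \<epsilon> then D.P n b else 0)"
    by (intro sum_mono pw)
  finally have main0: "1 - exp (- s * t) * exp (s\<^sup>2 * V / 8) - exp (- s * t) * exp ((- s)\<^sup>2 * V / 8) \<le>
      measure M {x \<in> space M. \<bar>phat lam w r n x - p\<bar> \<le> \<epsilon>}"
    unfolding meq .
  have main: "1 - 2 * exp (- s * t + s\<^sup>2 * V / 8) \<le>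
      measure M {x \<in> space M. \<bar>phat lam w r n x - p\<bar> \<le> \<epsilon>}"
    using main0 unfolding power2_minus exp_add by linarith
  have ex: "- s * t + s\<^sup>2 * V / 8 = - 2 * t\<^sup>2 / V"
    unfolding s_def using V by (simp add: field_simps power2_eq_square)
  have "ln (2 / \<alpha>) * V \<le> 2 * \<epsilon>\<^sup>2 * W\<^sup>2"
    using hyp eps unfolding W_def[symmetric] V_def[symmetric] by (simp add: field_simps)
  then have "ln (2 / \<alpha>) \<le> 2 * t\<^sup>2 / V"
    using V unfolding t_def by (simp add: field_simps power_mult_distrib)
  then have "exp (- 2 * t\<^sup>2 / V) \<le> exp (- ln (2 / \<alpha>))" by simp
  also have "\<dots> = \<alpha> / 2" using alpha by (simp add: exp_minus)
  finally show ?thesis using main unfolding ex by linarith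
qed

end
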